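(* Let $\Omega\subset\mathbb{C}^2$ be a simply connected domain and let $\{t_n\}_{n\in\mathbb{Z}}$ be nowhere vanishing holomorphic functions on $\Omega$ satisfying $\partial_x\partial_y\log t_n=t_{n+1}t_{n-1}/t_n^2$ for all $n$. Put $s_{n+1}=\partial_y\log(t_n/t_{n+1})$, $r_n=\partial_x\partial_y\log t_n$, $M_n=\partial_x\partial_y+s_{n+1}\partial_x+r_n$, $H_n=\partial_y+s_{n+1}$, $B_n=-r_n^{-1}\partial_x$. Suppose $\{u_n\}_{n\in\mathbb{Z}}$ are holomorphic functions on $\Omega$ with $M_nu_n=0$, $u_{n+1}=H_nu_n$ and $u_{n-1}=B_nu_n$ for all $n\in\mathbb{Z}$. Then $\tau_n=t_nu_n$ satisfies $\partial_x\partial_y\log\tau_n=\tau_{n+1}\tau_{n-1}/\tau_n^2$ for all $n\in\mathbb{Z}$, on any open subset where all $u_n$ are nowhere zero.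
   Context: Note $r_n=t_{n+1}t_{n-1}/t_n^2$ is nowhere zero, so $B_n$ is well defined. *)

theory Defs
  imports "HOL-Analysis.Analysis"
begin

definition holomorphic2 :: "(complex \<times> complex \<Rightarrow> complex) \<Rightarrow> (complex \<times> complex) set \<Rightarrow> bool" where
  "holomorphic2 f S \<longleftrightarrow>
     (\<forall>z\<in>S. \<exists>a b. (f has_derivative (\<lambda>h. a * fst h + b * snd h)) (at z))"

definition dx :: "(complex \<times> complex \<Rightarrow> complex) \<Rightarrow> complex \<times> complex \<Rightarrow> complex" where
  "dx f = (\<lambda>z. deriv (\<lambda>w. f (w, snd z)) (fst z))"

definition dy :: "(complex \<times> complex \<Rightarrow> complex) \<Rightarrow> complex \<times> complex \<Rightarrow> complex" where
  "dy f = (\<lambda>z. deriv (\<lambda>w. f (fst z, w)) (snd z))"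

text \<open>Logarithmic partial derivative: dy (log f) = dy f / f (independent of the branch of log).\<close>
definition dylog :: "(complex \<times> complex \<Rightarrow> complex) \<Rightarrow> complex \<times> complex \<Rightarrow> complex" where
  "dylog f = (\<lambda>z. dy f z / f z)"

definition dxdylog :: "(complex \<times> complex \<Rightarrow> complex) \<Rightarrow> complex \<times> complex \<Rightarrow> complex" where
  "dxdylog f = dx (dylog f)"

end

theory Submission
  imports Defs "HOL-Complex_Analysis.Complex_Analysis"
begin

lemma circ_int:
  fixes g :: "complex \<Rightarrow> complex"
  assumes "continuous_on (cball c R) g" "g holomorphic_on ball c R" "w \<in> ball c R"
  shows "deriv g w = integral {0..1} (\<lambda>s. g (c + R * exp(2 * of_real pi * \<i> * of_real s))
            / (c + R * exp(2 * of_real pi * \<i> * of_real s) - w)^2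
            * (2 * pi * \<i> * R * exp(2 * of_real pi * \<i> * of_real s))) / (2*pi*\<i>)"
proof -
  have h: "((\<lambda>u. g u / (u-w) ^ (Suc 1)) has_contour_integral ((2 * pi * \<i>) / (fact 1) * (deriv ^^ 1) g w))
           (circlepath c R)"
    by (rule Cauchy_has_contour_integral_higher_derivative_circlepath[OF assms])
  have e: "(\<lambda>u. g u / (u-w) ^ (Suc 1)) (circlepath c R s) * vector_derivative (circlepath c R) (at s within {0..1})
     = g (c + R * exp(2 * of_real pi * \<i> * of_real s))
            / (c + R * exp(2 * of_real pi * \<i> * of_real s) - w)^2
            * (2 * pi * \<i> * R * exp(2 * of_real pi * \<i> * of_real s))" if "s \<in> {0..1}" for s
    using that vector_derivative_circlepath01[of s c R] by (simp add: circlepath power2_eq_square)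
  from h have "((\<lambda>s. g (c + R * exp(2 * of_real pi * \<i> * of_real s))
            / (c + R * exp(2 * of_real pi * \<i> * of_real s) - w)^2
            * (2 * pi * \<i> * R * exp(2 * of_real pi * \<i> * of_real s))) has_integral ((2 * pi * \<i>) * deriv g w)) {0..1}"
    using has_integral_eq[OF e h[unfolded has_contour_integral_def]] by simp
  then show ?thesis by (simp add: integral_unique)
qed

lemma norm_E: "norm (exp(2 * of_real pi * \<i> * of_real (s::real))) = 1"
  by (simp add: norm_exp_eq_Re)

lemma param_holo:
  fixes \<phi> :: "complex \<Rightarrow> real \<Rightarrow> complex"
  assumes cont: "continuous_on (cball x0 R \<times> {0..1}) (\<lambda>(w,s). \<phi> w s)"
  and hol: "\<And>s. s \<in> {0..1} \<Longrightarrow> (\<lambda>w. \<phi> w s) holomorphic_on ball x0 R"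
  shows "(\<lambda>w. integral {0..1} (\<phi> w)) holomorphic_on ball x0 R"
proof -
  define E where "E s = exp(2 * of_real pi * \<i> * of_real s)" for s :: real
  define F where "F p \<sigma> = \<phi> (x0 + R*E \<sigma>) (snd p) / (x0 + R*E \<sigma> - fst p)^2 * (2*pi*\<i>*R*E \<sigma>)" for p :: "complex \<times> real" and \<sigma>
  define D where "D w s = integral {0..1} (F (w,s)) / (2*pi*\<i>)" for w s
  have cs: "continuous_on (cball x0 R) (\<lambda>w. \<phi> w s)" if "s \<in> {0..1}" for s
  proof -
    have m: "continuous_on (cball x0 R) (\<lambda>w. (w, s))" by (intro continuous_intros)
    have im: "(\<lambda>w. (w, s)) ` cball x0 R \<subseteq> cball x0 R \<times> {0..1}" using that by blast
    have "continuous_on (cball x0 R) (\<lambda>w. (\<lambda>(w,s). \<phi> w s) (w, s))"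
      by (rule continuous_on_compose2[OF cont m im])
    then show ?thesis by simp
  qed
  have cs2: "continuous_on {0..1} (\<phi> w)" if "w \<in> cball x0 R" for w
  proof -
    have m: "continuous_on {0..1} (\<lambda>s::real. (w, s))" by (intro continuous_intros)
    have im: "(\<lambda>s. (w, s)) ` {0..1} \<subseteq> cball x0 R \<times> {0..1}" using that by blast
    have "continuous_on {0..1} (\<lambda>s. (\<lambda>(w,s). \<phi> w s) (w, s))"
      by (rule continuous_on_compose2[OF cont m im])
    then show ?thesis by (simp add: eta_contract_eq)
  qed
  have dd: "deriv (\<lambda>w. \<phi> w s) w = D w s" if "w \<in> ball x0 R" "s \<in> {0..1}" for w s
    unfolding D_def F_def E_def using circ_int[OF cs[OF that(2)] hol[OF that(2)] that(1)] by simp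
  have der: "((\<lambda>w. \<phi> w s) has_field_derivative D w s) (at w within ball x0 R)"
    if "w \<in> ball x0 R" "s \<in> cbox 0 1" for w s
  proof -
    have s: "s \<in> {0..1}" using that(2) by simp
    show ?thesis
      using holomorphic_derivI[OF hol[OF s] open_ball that(1)] dd[OF that(1) s] by simp
  qed
  have nz: "x0 + R*E \<sigma> - w \<noteq> 0" if "w \<in> ball x0 R" for w \<sigma>
  proof
    assume "x0 + R*E \<sigma> - w = 0"
    hence "w = x0 + R*E \<sigma>" by simp
    hence "dist x0 w = norm (R * E \<sigma>)" by (simp add: dist_norm)
    also have "\<dots> = \<bar>R\<bar>" by (simp add: norm_mult E_def norm_E)
    finally show False using that by auto
  qed
  have inc: "x0 + R*E \<sigma> \<in> cball x0 R" if "R \<ge> 0" for \<sigma>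
    using that by (simp add: dist_norm norm_mult E_def norm_E)
  have contF: "continuous_on ((ball x0 R \<times> {0..1}) \<times> cbox 0 1) (\<lambda>(p, \<sigma>). F p \<sigma>)"
  proof (cases "R \<ge> 0")
    case False then show ?thesis by (simp add: ball_empty)
  next
    case True
    let ?S = "(ball x0 R \<times> {0..1}) \<times> cbox 0 (1::real)"
    have m: "continuous_on ?S (\<lambda>q. (x0 + R*E (snd q), snd (fst q)))"
      unfolding E_def by (intro continuous_intros)
    have im: "(\<lambda>q. (x0 + R*E (snd q), snd (fst q))) ` ?S \<subseteq> cball x0 R \<times> {0..1}"
    proof (rule image_subsetI)
      fix q assume "q \<in> ?S"
      then have "snd (fst q) \<in> {0..1}" by (auto simp: mem_Times_iff)
      then show "(x0 + R*E (snd q), snd (fst q)) \<in> cball x0 R \<times> {0..1}"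
        using inc[OF True] by blast
    qed
    have c1: "continuous_on ?S (\<lambda>q. (\<lambda>(w,s). \<phi> w s) ((\<lambda>q. (x0 + R*E (snd q), snd (fst q))) q))"
      by (rule continuous_on_compose2[OF cont m im])
    hence c1': "continuous_on ?S (\<lambda>q. \<phi> (x0 + R*E (snd q)) (snd (fst q)))" by simp
    have c2: "continuous_on ?S (\<lambda>q. (x0 + R*E (snd q) - fst (fst q))^2)"
      unfolding E_def by (intro continuous_intros)
    have c3: "continuous_on ?S (\<lambda>q. 2*pi*\<i>*R*E (snd q))"
      unfolding E_def by (intro continuous_intros)
    have nz2: "\<forall>q\<in>?S. (x0 + R*E (snd q) - fst (fst q))^2 \<noteq> 0"
    proof
      fix q assume "q \<in> ?S"
      then have "fst (fst q) \<in> ball x0 R" by (auto simp: mem_Times_iff)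
      then show "(x0 + R*E (snd q) - fst (fst q))^2 \<noteq> 0" using nz by simp
    qed
    have "continuous_on ?S (\<lambda>q. \<phi> (x0 + R*E (snd q)) (snd (fst q)) / (x0 + R*E (snd q) - fst (fst q))^2 * (2*pi*\<i>*R*E (snd q)))"
      by (rule continuous_on_mult[OF continuous_on_divide[OF c1' c2 nz2] c3])
    then show ?thesis unfolding F_def by (simp add: split_def)
  qed
  have contD: "continuous_on (ball x0 R \<times> cbox 0 1) (\<lambda>(w, s). D w s)"
  proof -
    have "continuous_on (ball x0 R \<times> {0..1}) (\<lambda>p. integral (cbox 0 1) (F p))"
      by (rule integral_continuous_on_param[OF contF])
    hence "continuous_on (ball x0 R \<times> {0..1}) (\<lambda>p. integral (cbox 0 1) (F p) / (2*pi*\<i>))"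
      by (rule continuous_on_divide[OF _ continuous_on_const]) simp
    then show ?thesis unfolding D_def split_def by simp
  qed
  have int: "\<phi> w integrable_on cbox 0 1" if "w \<in> ball x0 R" for w
    using integrable_continuous_interval[OF cs2[of w]] that by simp
  have "(\<lambda>x. integral (cbox 0 1) (\<phi> x)) holomorphic_on ball x0 R"
    by (rule leibniz_rule_holomorphic[where fx=D and U="ball x0 R" and f=\<phi> and a=0 and b=1, OF der int contD convex_ball])
  then show ?thesis by simp
qed

lemma hol2_partials:
  assumes "holomorphic2 f S" "z \<in> S"
  shows "((\<lambda>w. f (w, snd z)) has_field_derivative dx f z) (at (fst z))"
    and "((\<lambda>w. f (fst z, w)) has_field_derivative dy f z) (at (snd z))"
proof -
  obtain a b where d: "(f has_derivative (\<lambda>h. a * fst h + b * snd h)) (at z)"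
    using assms unfolding holomorphic2_def by blast
  have p1: "((\<lambda>w. (w, snd z)) has_derivative (\<lambda>h. (h, 0))) (at (fst z))"
    by (auto intro!: derivative_eq_intros)
  have p2: "((\<lambda>w. (fst z, w)) has_derivative (\<lambda>h. (0, h))) (at (snd z))"
    by (auto intro!: derivative_eq_intros)
  have d': "(f has_derivative (\<lambda>h. a * fst h + b * snd h)) (at (fst z, snd z))" using d by simp
  have "((\<lambda>w. f (w, snd z)) has_derivative (\<lambda>h. a * h)) (at (fst z))"
    using has_derivative_compose[OF p1 d'] by (simp add: o_def mult.commute)
  hence 1: "((\<lambda>w. f (w, snd z)) has_field_derivative a) (at (fst z))"
    by (rule has_derivative_imp_has_field_derivative) (simp add: mult.commute)
  have "((\<lambda>w. f (fst z, w)) has_derivative (\<lambda>h. b * h)) (at (snd z))"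
    using has_derivative_compose[OF p2 d'] by (simp add: o_def mult.commute)
  hence 2: "((\<lambda>w. f (fst z, w)) has_field_derivative b) (at (snd z))"
    by (rule has_derivative_imp_has_field_derivative) (simp add: mult.commute)
  show "((\<lambda>w. f (w, snd z)) has_field_derivative dx f z) (at (fst z))"
    using 1 DERIV_imp_deriv[OF 1] by (simp add: dx_def)
  show "((\<lambda>w. f (fst z, w)) has_field_derivative dy f z) (at (snd z))"
    using 2 DERIV_imp_deriv[OF 2] by (simp add: dy_def)
qed

lemma hol2_cont:
  assumes "holomorphic2 f S" "open S"
  shows "continuous_on S f"
proof (rule continuous_at_imp_continuous_on, rule ballI)
  fix z assume "z \<in> S"
  then obtain a b where d: "(f has_derivative (\<lambda>h. a * fst h + b * snd h)) (at z)"
    using assms unfolding holomorphic2_def by blast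
  then show "isCont f z" by (rule has_derivative_continuous)
qed

lemma dy_diff_x:
  assumes hol: "holomorphic2 f S" and S: "open S" and z: "z \<in> S"
  shows "(\<lambda>w. dy f (w, snd z)) field_differentiable at (fst z)"
proof -
  obtain x0 y0 where zz: "z = (x0, y0)" by (cases z)
  obtain e where e: "e > 0" "ball z e \<subseteq> S" using S z open_contains_ball by blast
  define R where "R = e / 3"
  have R: "R > 0" using e by (simp add: R_def)
  have box: "(a, b) \<in> S" if "a \<in> cball x0 R" "b \<in> cball y0 R" for a b
  proof -
    have "dist (a, b) z \<le> dist a x0 + dist b y0"
      unfolding zz dist_norm using norm_Pair_le[of "a - x0" "b - y0"] by simp
    also have "\<dots> < e"
    proof -
      have "dist a x0 \<le> R" "dist b y0 \<le> R" using that by (simp_all add: dist_commute)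
      then show ?thesis using R_def e(1) by linarith
    qed
    finally have "(a, b) \<in> ball z e" by (simp add: dist_commute)
    then show ?thesis using e(2) by blast
  qed
  have fc: "continuous_on S f" by (rule hol2_cont[OF hol S])
  define E where "E s = exp(2 * of_real pi * \<i> * of_real s)" for s :: real
  have nE: "norm (E s) = 1" for s unfolding E_def by (rule norm_E)
  have inc: "y0 + R * E s \<in> cball y0 R" for s using R by (simp add: dist_norm norm_mult nE)
  define \<phi> where "\<phi> w s = f (w, y0 + R * E s) / (y0 + R * E s - y0)^2 * (2 * pi * \<i> * R * E s)" for w s
  have hx: "(\<lambda>w. f (w, b)) holomorphic_on ball x0 R" if "b \<in> cball y0 R" for b
    unfolding holomorphic_on_def
  proof
    fix w assume "w \<in> ball x0 R"
    hence "(w, b) \<in> S" using box that by auto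
    from hol2_partials(1)[OF hol this] show "(\<lambda>w. f (w, b)) field_differentiable at w within ball x0 R"
      using field_differentiable_at_within field_differentiable_def by fastforce
  qed
  have hy: "(\<lambda>b. f (w, b)) holomorphic_on ball y0 R" if "w \<in> cball x0 R" for w
    unfolding holomorphic_on_def
  proof
    fix b assume "b \<in> ball y0 R"
    hence "(w, b) \<in> S" using box that by auto
    from hol2_partials(2)[OF hol this] show "(\<lambda>b. f (w, b)) field_differentiable at b within ball y0 R"
      using field_differentiable_at_within field_differentiable_def by fastforce
  qed
  have cy: "continuous_on (cball y0 R) (\<lambda>b. f (w, b))" if "w \<in> cball x0 R" for w
  proof -
    have m: "continuous_on (cball y0 R) (\<lambda>b. (w, b))" by (intro continuous_intros)
    have im: "(\<lambda>b. (w, b)) ` cball y0 R \<subseteq> S" using box that by blast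
    show ?thesis by (rule continuous_on_compose2[OF fc m im])
  qed
  have eq: "dy f (w, y0) = integral {0..1} (\<phi> w) / (2*pi*\<i>)" if "w \<in> ball x0 R" for w
  proof -
    have "dy f (w, y0) = deriv (\<lambda>b. f (w, b)) y0" by (simp add: dy_def)
    also have "\<dots> = integral {0..1} (\<phi> w) / (2*pi*\<i>)"
      unfolding \<phi>_def E_def
      by (rule circ_int[OF cy hy]) (use that R in auto)
    finally show ?thesis .
  qed
  have cphi: "continuous_on (cball x0 R \<times> {0..1}) (\<lambda>(w,s). \<phi> w s)"
  proof -
    let ?S = "cball x0 R \<times> {0..(1::real)}"
    have m: "continuous_on ?S (\<lambda>q. (fst q, y0 + R * E (snd q)))"
      unfolding E_def by (intro continuous_intros)
    have im: "(\<lambda>q. (fst q, y0 + R * E (snd q))) ` ?S \<subseteq> S"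
    proof (rule image_subsetI)
      fix q assume "q \<in> ?S"
      then have "fst q \<in> cball x0 R" by (auto simp: mem_Times_iff)
      then show "(fst q, y0 + R * E (snd q)) \<in> S" by (rule box[OF _ inc])
    qed
    have c1: "continuous_on ?S (\<lambda>q. f ((\<lambda>q. (fst q, y0 + R * E (snd q))) q))"
      by (rule continuous_on_compose2[OF fc m im])
    have c2: "continuous_on ?S (\<lambda>q. (y0 + R * E (snd q) - y0)^2)"
      unfolding E_def by (intro continuous_intros)
    have c3: "continuous_on ?S (\<lambda>q. 2*pi*\<i>*R*E (snd q))"
      unfolding E_def by (intro continuous_intros)
    have nz: "(y0 + R * E s - y0)^2 \<noteq> 0" for s
      using R nE[of s] by auto
    have "continuous_on ?S (\<lambda>q. f (fst q, y0 + R * E (snd q)) / (y0 + R * E (snd q) - y0)^2 * (2*pi*\<i>*R*E (snd q)))"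
      apply (rule continuous_on_mult[OF continuous_on_divide[OF _ c2] c3])
      using c1 nz by auto
    then show ?thesis unfolding \<phi>_def by (simp add: split_def)
  qed
  have hphi: "(\<lambda>w. \<phi> w s) holomorphic_on ball x0 R" if "s \<in> {0..1}" for s
  proof -
    have nz: "(y0 + R * E s - y0)^2 \<noteq> 0"
      using R nE[of s] by auto
    show ?thesis unfolding \<phi>_def
      by (intro holomorphic_on_mult holomorphic_on_divide hx inc holomorphic_on_const nz)
  qed
  have G: "(\<lambda>w. integral {0..1} (\<phi> w)) holomorphic_on ball x0 R"
    by (rule param_holo[OF cphi hphi])
  have Gd: "(\<lambda>w. integral {0..1} (\<phi> w)) field_differentiable at x0"
    using holomorphic_on_imp_differentiable_at[OF G open_ball] R by simp
  have "(\<lambda>w. integral {0..1} (\<phi> w) / (2*pi*\<i>)) field_differentiable at x0 within UNIV"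
    using field_differentiable_divide[OF Gd field_differentiable_const[of "2*pi*\<i>"]] by simp
  hence "(\<lambda>w. dy f (w, y0)) field_differentiable at x0 within UNIV"
    apply (rule field_differentiable_transform_within[OF R UNIV_I, rotated])
    using eq by (simp add: dist_commute)
  then show ?thesis by (simp add: zz)
qed

lemma alg: fixes A X Y U r s t1 t0 tm u1 um :: complex
 assumes "U \<noteq> 0" "t0 \<noteq> 0" "A + s*X + r*U = 0" "u1 = Y + s*U" "um = - (1/r)*X" "r = t1*tm/t0^2"
 and "t1 \<noteq> 0" "tm \<noteq> 0"
 shows "r + (A*U - Y*X)/(U*U) = (t1*u1)*(tm*um)/(t0*U)^2"
proof -
  have rnz: "r \<noteq> 0" using assms by simp
  have tt: "t1*tm = r*t0^2" using assms by (simp add: field_simps)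
  have Ae: "A = - s*X - r*U" using assms(3) by algebra
  have "(t1*u1)*(tm*um)/(t0*U)^2 = r * (u1*um)/U^2"
    using assms(1,2) by (simp add: assms(6) power_mult_distrib field_simps)
  also have "\<dots> = - ((Y + s*U)*X)/U^2" using rnz by (simp add: assms(4,5))
  also have "\<dots> = r + (A*U - Y*X)/(U*U)" using assms(1) by (simp add: Ae field_simps power2_eq_square)
  finally show ?thesis ..
qed

theorem mainTheorem14:
  fixes \<Omega> :: "(complex \<times> complex) set"
    and t u :: "int \<Rightarrow> complex \<times> complex \<Rightarrow> complex"
    and U :: "(complex \<times> complex) set"
  assumes dom: "open \<Omega>" "connected \<Omega>" "\<Omega> \<noteq> {}"
    and sc: "simply_connected \<Omega>"
    and t_hol: "\<And>n. holomorphic2 (t n) \<Omega>"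
    and t_nz: "\<And>n z. z \<in> \<Omega> \<Longrightarrow> t n z \<noteq> 0"
    and toda: "\<And>n z. z \<in> \<Omega> \<Longrightarrow>
                 dxdylog (t n) z = t (n + 1) z * t (n - 1) z / (t n z)^2"
    and u_hol: "\<And>n. holomorphic2 (u n) \<Omega>"
    and M: "\<And>n z. z \<in> \<Omega> \<Longrightarrow>
              dx (dy (u n)) z + dylog (\<lambda>w. t n w / t (n + 1) w) z * dx (u n) z
                + dxdylog (t n) z * u n z = 0"
    and H: "\<And>n z. z \<in> \<Omega> \<Longrightarrow>
              u (n + 1) z = dy (u n) z + dylog (\<lambda>w. t n w / t (n + 1) w) z * u n z"
    and B: "\<And>n z. z \<in> \<Omega> \<Longrightarrow>
              u (n - 1) z = - (1 / dxdylog (t n) z) * dx (u n) z"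
    and U: "open U" "U \<subseteq> \<Omega>"
    and u_nz: "\<And>n z. z \<in> U \<Longrightarrow> u n z \<noteq> 0"
  shows "\<forall>n. \<forall>z\<in>U.
           dxdylog (\<lambda>w. t n w * u n w) z
             = (t (n + 1) z * u (n + 1) z) * (t (n - 1) z * u (n - 1) z) / (t n z * u n z)^2"
  proof (intro allI ballI)
  fix n z assume zU: "z \<in> U"
  have zO: "z \<in> \<Omega>" using U zU by auto
  define x where "x = fst z"
  define y where "y = snd z"
  have zxy: "z = (x, y)" by (simp add: x_def y_def)
  have prod: "dylog (\<lambda>w. t n w * u n w) p = dylog (t n) p + dylog (u n) p" if "p \<in> U" for p
  proof -
    have pO: "p \<in> \<Omega>" using that U by auto
    have D: "((\<lambda>w. t n (fst p, w) * u n (fst p, w)) has_field_derivative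
          dy (t n) p * u n (fst p, snd p) + dy (u n) p * t n (fst p, snd p)) (at (snd p))"
      by (rule DERIV_mult[OF hol2_partials(2)[OF t_hol pO] hol2_partials(2)[OF u_hol pO]])
    have "dy (\<lambda>w. t n w * u n w) p = deriv (\<lambda>w. t n (fst p, w) * u n (fst p, w)) (snd p)"
      by (simp add: dy_def)
    also have "\<dots> = dy (t n) p * u n p + dy (u n) p * t n p"
      using DERIV_imp_deriv[OF D] by simp
    finally show ?thesis using t_nz[OF pO] u_nz[OF that] by (simp add: dylog_def field_simps)
  qed
  obtain e where e: "e > 0" "ball z e \<subseteq> U" using U zU open_contains_ball by blast
  have inU: "(w, y) \<in> U" if "dist w x < e" for w
  proof -
    have "dist z (w, y) = dist x w" by (simp add: zxy dist_Pair_Pair)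
    then have "(w, y) \<in> ball z e" using that by (simp add: dist_commute)
    then show ?thesis using e(2) by blast
  qed
  have ev: "eventually (\<lambda>w. dylog (\<lambda>w. t n w * u n w) (w, y) = dylog (t n) (w, y) + dylog (u n) (w, y)) (nhds x)"
    unfolding eventually_nhds_metric
  proof (intro exI conjI allI impI)
    show "e > 0" by (rule e(1))
    fix w assume "dist w x < e"
    then show "dylog (\<lambda>w. t n w * u n w) (w, y) = dylog (t n) (w, y) + dylog (u n) (w, y)"
      by (rule prod[OF inU])
  qed
  have tx: "((\<lambda>w. t n (w, y)) has_field_derivative dx (t n) z) (at x)"
    using hol2_partials(1)[OF t_hol zO] by (simp add: x_def y_def)
  have ux: "((\<lambda>w. u n (w, y)) has_field_derivative dx (u n) z) (at x)"
    using hol2_partials(1)[OF u_hol zO] by (simp add: x_def y_def)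
  have dtx: "(\<lambda>w. dy (t n) (w, y)) field_differentiable at x"
    using dy_diff_x[OF t_hol dom(1) zO] by (simp add: x_def y_def)
  have dux: "(\<lambda>w. dy (u n) (w, y)) field_differentiable at x"
    using dy_diff_x[OF u_hol dom(1) zO] by (simp add: x_def y_def)
  have tnz: "t n (x, y) \<noteq> 0" using t_nz[OF zO] zxy by simp
  have unz: "u n (x, y) \<noteq> 0" using u_nz[OF zU] zxy by simp
  have dT: "(\<lambda>w. dylog (t n) (w, y)) field_differentiable at x"
    unfolding dylog_def
    by (rule field_differentiable_divide[where g="\<lambda>w. t n (w, y)", OF dtx _ tnz]) (use tx in \<open>auto simp: field_differentiable_def\<close>)
  have Du0: "((\<lambda>w. dy (u n) (w, y)) has_field_derivative dx (dy (u n)) z) (at x)"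
    using field_differentiable_derivI[OF dux] by (simp add: dx_def x_def y_def)
  have Du: "((\<lambda>w. dylog (u n) (w, y)) has_field_derivative
       (dx (dy (u n)) z * u n (x, y) - dy (u n) (x, y) * dx (u n) z) / (u n (x, y) * u n (x, y))) (at x)"
    unfolding dylog_def by (rule DERIV_divide[OF Du0 ux unz])
  have dU: "(\<lambda>w. dylog (u n) (w, y)) field_differentiable at x"
    using Du by (auto simp: field_differentiable_def)
  have key: "dxdylog (\<lambda>w. t n w * u n w) z = dxdylog (t n) z +
     (dx (dy (u n)) z * u n z - dy (u n) z * dx (u n) z) / (u n z * u n z)"
  proof -
    have "dxdylog (\<lambda>w. t n w * u n w) z = deriv (\<lambda>w. dylog (\<lambda>w. t n w * u n w) (w, y)) x"
      by (simp add: dxdylog_def dx_def x_def y_def)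
    also have "\<dots> = deriv (\<lambda>w. dylog (t n) (w, y) + dylog (u n) (w, y)) x"
      by (rule deriv_cong_ev[OF ev refl])
    also have "\<dots> = deriv (\<lambda>w. dylog (t n) (w, y)) x + deriv (\<lambda>w. dylog (u n) (w, y)) x"
      by (rule deriv_add[OF dT dU])
    also have "deriv (\<lambda>w. dylog (t n) (w, y)) x = dxdylog (t n) z"
      by (simp add: dxdylog_def dx_def x_def y_def)
    also have "deriv (\<lambda>w. dylog (u n) (w, y)) x =
       (dx (dy (u n)) z * u n (x, y) - dy (u n) (x, y) * dx (u n) z) / (u n (x, y) * u n (x, y))"
      by (rule DERIV_imp_deriv[OF Du])
    finally show ?thesis by (simp add: zxy)
  qed
  have T: "t n z \<noteq> 0" "t (n+1) z \<noteq> 0" "t (n-1) z \<noteq> 0" using t_nz zO by auto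
  have Uz: "u n z \<noteq> 0" using u_nz zU by auto
  show "dxdylog (\<lambda>w. t n w * u n w) z
             = (t (n + 1) z * u (n + 1) z) * (t (n - 1) z * u (n - 1) z) / (t n z * u n z)^2"
    unfolding key by (rule alg[OF Uz T(1) M[OF zO] H[OF zO] B[OF zO] toda[OF zO] T(2) T(3)])
qed

end
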